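(* Let $u$ be a bounded nonnegative function satisfying $u(x)=C_0|x|^{-\alpha}(1+o(1))$ as $|x|\to\infty$ for some $\alpha>d$ and $C_0>0$, let $(\xi_q)_{q\in\mathbb{Z}^d}$ be i.i.d. $\mathbb{R}^d$-valued random variables with $\mathbb{P}(\xi_q\in dx)=\exp(-|x|^\theta)\,dx/Z(d,\theta)$ for some $\theta>0$, and let $V_\xi(x)=\sum_{q\in\mathbb{Z}^d}u(x-q-\xi_q)$. Then there exist finite constants $c_1,c_2$ such that for all $r\ge0$, $$\mathbb{E}_\theta\Big[\exp\Big(r\sup_{x\in\Lambda_1}V_\xi(x)\Big)\Big]\le c_1\exp(c_2r^{1+d/\theta}).$$
   Context: $Z(d,\theta)$ is the normalizing constant, $\mathbb{E}_\theta$ the expectation with respect to $(\xi_q)$, and $\Lambda_1=(-1/2,1/2)^d$. *)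

theory Defs
  imports "HOL-Probability.Probability"
begin

definition lat :: "int^'d \<Rightarrow> real^'d" where
  "lat q = (\<chi> i. real_of_int (q $ i))"

definition Lambda1 :: "(real^'d) set" where
  "Lambda1 = {x. \<forall>i. -1/2 < x $ i \<and> x $ i < 1/2}"

definition theta_density :: "real \<Rightarrow> real^'d \<Rightarrow> real" where
  "theta_density \<theta> x =
     exp (- (norm x powr \<theta>)) / (LINT y|lborel. exp (- (norm (y::real^'d) powr \<theta>)))"

text \<open>The potential V_xi(x) = sum over q of u(x - q - xi_q), as a value in [0,\<infinity>]
  (the terms are nonnegative).\<close>
definition Vxi :: "(real^'d \<Rightarrow> real) \<Rightarrow> (int^'d \<Rightarrow> real^'d) \<Rightarrow> real^'d \<Rightarrow> ennreal" where
  "Vxi u xi x = (\<integral>\<^sup>+ q. ennreal (u (x - lat q - xi q)) \<partial>count_space UNIV)"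

definition exp_ennreal :: "real \<Rightarrow> ennreal \<Rightarrow> ennreal" where
  "exp_ennreal r S = (if S = \<infinity> then \<infinity> else ennreal (exp (r * enn2real S)))"

end

theory Submission
  imports Defs "HOL-Real_Asymp.Real_Asymp"
begin

definition boxN :: "nat \<Rightarrow> (int^'d) set" where
  "boxN N = {q. \<forall>i. \<bar>q $ i\<bar> \<le> int N}"

lemma boxN_bij: "bij_betw vec_lambda (PiE (UNIV::'d::finite set) (\<lambda>_. {-int N..int N})) (boxN N :: (int^'d) set)"
  unfolding bij_betw_def
proof
  show "inj_on vec_lambda (PiE (UNIV::'d set) (\<lambda>_. {-int N..int N}))"
    by (auto simp: inj_on_def vec_lambda_inject)
  show "vec_lambda ` (PiE (UNIV::'d set) (\<lambda>_. {-int N..int N})) = boxN N"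
  proof (rule set_eqI, rule iffI)
    fix q assume "q \<in> vec_lambda ` (PiE (UNIV::'d set) (\<lambda>_. {-int N..int N}))"
    then show "q \<in> boxN N" by (auto simp: boxN_def PiE_iff abs_le_iff) (metis minus_le_iff)
  next
    fix q :: "int^'d"
    assume "q \<in> boxN N"
    then have "\<forall>i. \<bar>q $ i\<bar> \<le> int N" by (simp add: boxN_def)
    then have "vec_nth q \<in> PiE UNIV (\<lambda>_. {-int N..int N})" by (force simp: abs_le_iff)
    moreover have "q = vec_lambda (vec_nth q)" by simp
    ultimately show "q \<in> vec_lambda ` (PiE UNIV (\<lambda>_. {-int N..int N}))" by blast
  qed
qed

lemma finite_boxN: "finite (boxN N :: (int^'d::finite) set)"
proof -
  have "finite (PiE (UNIV::'d set) (\<lambda>_. {-int N..int N}))" by (simp add: finite_PiE)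
  thus ?thesis using bij_betw_finite[OF boxN_bij[of N, where 'd='d]] by blast
qed

lemma boxN_sum_prod:
  fixes h :: "int \<Rightarrow> 'c::comm_semiring_1"
  shows "(\<Sum>q\<in>(boxN N :: (int^'d::finite) set). \<Prod>i\<in>UNIV. h (q $ i)) = (\<Sum>n\<in>{-int N..int N}. h n) ^ CARD('d)"
proof -
  have "(\<Sum>q\<in>(boxN N :: (int^'d) set). \<Prod>i\<in>UNIV. h (q $ i))
      = (\<Sum>g\<in>PiE (UNIV::'d set) (\<lambda>_. {-int N..int N}). \<Prod>i\<in>UNIV. h (vec_lambda g $ i))"
    by (rule sum.reindex_bij_betw[OF boxN_bij, symmetric])
  also have "\<dots> = (\<Sum>g\<in>PiE (UNIV::'d set) (\<lambda>_. {-int N..int N}). \<Prod>i\<in>UNIV. h (g i))"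
    by simp
  also have "\<dots> = (\<Prod>i\<in>(UNIV::'d set). \<Sum>n\<in>{-int N..int N}. h n)"
    by (rule prod_sum_PiE[symmetric]) auto
  also have "\<dots> = (\<Sum>n\<in>{-int N..int N}. h n) ^ CARD('d)" by simp
  finally show ?thesis .
qed

lemma boxN_mono: "M \<le> N \<Longrightarrow> boxN M \<subseteq> boxN N"
  by (auto simp: boxN_def) (meson dual_order.trans of_nat_mono)

lemma in_boxN: "\<exists>N. (q::int^'d::finite) \<in> boxN N"
proof -
  let ?N = "nat (\<Sum>j\<in>UNIV. \<bar>q $ j\<bar>)"
  have "\<bar>q $ i\<bar> \<le> (\<Sum>j\<in>UNIV. \<bar>q $ j\<bar>)" for i
    by (rule member_le_sum) auto
  then have "\<bar>q $ i\<bar> \<le> int ?N" for i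
    by (simp add: sum_nonneg)
  then show ?thesis unfolding boxN_def by blast
qed

lemma sym_sum_int:
  fixes g :: "nat \<Rightarrow> real"
  assumes "\<And>k. g k \<ge> 0"
  shows "(\<Sum>n\<in>{-int N..int N}. g (nat \<bar>n\<bar>)) \<le> 2 * (\<Sum>k\<le>N. g k)"
proof -
  have eqset: "{-int N..int N} = {-int N..0} \<union> {0..int N}" by auto
  have u:  "(\<Sum>n\<in>{-int N..0} \<union> {0..int N}. g (nat \<bar>n\<bar>)) + (\<Sum>n\<in>{-int N..0} \<inter> {0..int N}. g (nat \<bar>n\<bar>))
     = (\<Sum>n\<in>{-int N..0}. g (nat \<bar>n\<bar>)) + (\<Sum>n\<in>{0..int N}. g (nat \<bar>n\<bar>))"
    by (rule sum.union_inter) auto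
  have nn: "(\<Sum>n\<in>{-int N..0} \<inter> {0..int N}. g (nat \<bar>n\<bar>)) \<ge> 0"
    by (rule sum_nonneg) (use assms in auto)
  have "(\<Sum>n\<in>{-int N..int N}. g (nat \<bar>n\<bar>)) \<le> (\<Sum>n\<in>{-int N..0}. g (nat \<bar>n\<bar>)) + (\<Sum>n\<in>{0..int N}. g (nat \<bar>n\<bar>))"
    unfolding eqset using u nn by linarith
  also have "(\<Sum>n\<in>{0..int N}. g (nat \<bar>n\<bar>)) = (\<Sum>k\<le>N. g k)"
  proof -
    have "bij_betw int {..N} {0..int N}"
      by (rule bij_betwI[where g=nat]) auto
    from sum.reindex_bij_betw[OF this, of "\<lambda>n. g (nat \<bar>n\<bar>)"] show ?thesis by simp
  qed
  also have "(\<Sum>n\<in>{-int N..0}. g (nat \<bar>n\<bar>)) = (\<Sum>k\<le>N. g k)"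
  proof -
    have "bij_betw (\<lambda>k. - int k) {..N} {-int N..0}"
      by (rule bij_betwI[where g="\<lambda>n. nat (- n)"]) auto
    from sum.reindex_bij_betw[OF this, of "\<lambda>n. g (nat \<bar>n\<bar>)"] show ?thesis by simp
  qed
  finally show ?thesis by simp
qed

lemma norm_lat_ge: "\<bar>real_of_int (q $ i)\<bar> \<le> norm (lat q)"
  using component_le_norm_cart[of "lat q" i] by (simp add: lat_def)

lemma summable_shift_powr:
  fixes \<beta> :: real assumes "\<beta> > 1"
  shows "summable (\<lambda>k::nat. (1 + real k) powr (-\<beta>))"
proof -
  have "summable (\<lambda>n::nat. real n powr (-\<beta>))"
    using assms by (simp add: summable_real_powr_iff)
  then have "summable (\<lambda>k::nat. real (Suc k) powr (-\<beta>))"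
    by (subst summable_Suc_iff)
  then show ?thesis by simp
qed

lemma lattice_powr_sum:
  fixes \<alpha> :: real
  assumes "\<alpha> > real CARD('d::finite)"
  shows "\<exists>C. \<forall>N. (\<Sum>q\<in>(boxN N :: (int^'d) set). (1 + norm (lat q)) powr (-\<alpha>)) \<le> C"
proof -
  define d where "d = real CARD('d)"
  have d0: "d > 0" by (simp add: d_def)
  define \<beta> where "\<beta> = \<alpha> / d"
  have b1: "\<beta> > 1" using assms d0 by (simp add: \<beta>_def d_def)
  define g where "g k = (1 + real k) powr (-\<beta>)" for k :: nat
  have gs: "summable g" unfolding g_def using summable_shift_powr[OF b1] .
  have pt: "(1 + norm (lat q)) powr (-\<alpha>) \<le> (\<Prod>i\<in>UNIV. g (nat \<bar>q $ i\<bar>))" for q :: "int^'d"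
  proof -
    have "(1 + norm (lat q)) powr (-\<alpha>) = ((1 + norm (lat q)) powr (-\<beta>)) ^ CARD('d)"
      proof -
      have nz: "1 + norm (lat q) \<noteq> 0" by (smt (verit) norm_ge_zero)
      show ?thesis by (subst powr_power[OF nz]) (simp add: \<beta>_def d_def)
    qed
    also have "\<dots> = (\<Prod>i\<in>(UNIV::'d set). (1 + norm (lat q)) powr (-\<beta>))" by simp
    also have "\<dots> \<le> (\<Prod>i\<in>UNIV. g (nat \<bar>q $ i\<bar>))"
    proof (rule prod_mono, safe)
      fix i
      show "0 \<le> (1 + norm (lat q)) powr (-\<beta>)" by simp
      have "g (nat \<bar>q $ i\<bar>) = (1 + \<bar>real_of_int (q $ i)\<bar>) powr (-\<beta>)"
        by (simp add: g_def)
      moreover have "(1 + norm (lat q)) powr (-\<beta>) \<le> (1 + \<bar>real_of_int (q $ i)\<bar>) powr (-\<beta>)"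
        by (rule powr_mono2') (use b1 norm_lat_ge[of q i] in auto)
      ultimately show "(1 + norm (lat q)) powr (-\<beta>) \<le> g (nat \<bar>q $ i\<bar>)" by simp
    qed
    finally show ?thesis .
  qed
  have "(\<Sum>q\<in>(boxN N :: (int^'d) set). (1 + norm (lat q)) powr (-\<alpha>)) \<le> (2 * suminf g) ^ CARD('d)" for N
  proof -
    have "(\<Sum>q\<in>(boxN N :: (int^'d) set). (1 + norm (lat q)) powr (-\<alpha>))
        \<le> (\<Sum>q\<in>(boxN N :: (int^'d) set). \<Prod>i\<in>UNIV. g (nat \<bar>q $ i\<bar>))"
      by (rule sum_mono) (rule pt)
    also have "\<dots> = (\<Sum>n\<in>{-int N..int N}. g (nat \<bar>n\<bar>)) ^ CARD('d)"
      by (rule boxN_sum_prod)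
    also have "\<dots> \<le> (2 * suminf g) ^ CARD('d)"
    proof (rule power_mono)
      have "(\<Sum>n\<in>{-int N..int N}. g (nat \<bar>n\<bar>)) \<le> 2 * (\<Sum>k\<le>N. g k)"
        by (rule sym_sum_int) (simp add: g_def)
      also have "(\<Sum>k\<le>N. g k) \<le> suminf g"
        by (rule sum_le_suminf[OF gs]) (auto simp: g_def)
      finally show "(\<Sum>n\<in>{-int N..int N}. g (nat \<bar>n\<bar>)) \<le> 2 * suminf g" by simp
      show "0 \<le> (\<Sum>n\<in>{-int N..int N}. g (nat \<bar>n\<bar>))" by (rule sum_nonneg) (simp add: g_def)
    qed
    finally show ?thesis .
  qed
  then show ?thesis by blast
qed

lemma lattice_count:
  fixes L :: real
  assumes "L \<ge> 0"
  shows "(\<Sum>q\<in>(boxN N :: (int^'d::finite) set). (if norm (lat q) < L then 1 else 0::real)) \<le> (2 * L + 2) ^ CARD('d)"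
proof -
  define g where "g k = (if real k < L then 1 else 0::real)" for k :: nat
  have pt: "(if norm (lat q) < L then 1 else 0::real) \<le> (\<Prod>i\<in>UNIV. g (nat \<bar>q $ i\<bar>))" for q :: "int^'d"
  proof (cases "norm (lat q) < L")
    case True
    then have "g (nat \<bar>q $ i\<bar>) = 1" for i
      using norm_lat_ge[of q i] by (simp add: g_def)
    then show ?thesis using True by simp
  next
    case False
    then show ?thesis by (simp add: g_def prod_nonneg)
  qed
  have "(\<Sum>q\<in>(boxN N :: (int^'d) set). (if norm (lat q) < L then 1 else 0::real))
        \<le> (\<Sum>q\<in>(boxN N :: (int^'d) set). \<Prod>i\<in>UNIV. g (nat \<bar>q $ i\<bar>))"
    by (rule sum_mono) (rule pt)
  also have "\<dots> = (\<Sum>n\<in>{-int N..int N}. g (nat \<bar>n\<bar>)) ^ CARD('d)"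
    by (rule boxN_sum_prod)
  also have "\<dots> \<le> (2 * L + 2) ^ CARD('d)"
  proof (rule power_mono)
    have "(\<Sum>n\<in>{-int N..int N}. g (nat \<bar>n\<bar>)) \<le> 2 * (\<Sum>k\<le>N. g k)"
      by (rule sym_sum_int) (simp add: g_def)
    also have "(\<Sum>k\<le>N. g k) \<le> L + 1"
    proof -
      have "(\<Sum>k\<le>N. g k) = real (card ({..N} \<inter> {k. real k < L}))"
        by (simp add: g_def sum.If_cases)
      also have "card ({..N} \<inter> {k. real k < L}) \<le> card {..<nat \<lceil>L\<rceil>}"
        by (rule card_mono) (auto, linarith)
      finally show ?thesis using assms by simp linarith
    qed
    finally show "(\<Sum>n\<in>{-int N..int N}. g (nat \<bar>n\<bar>)) \<le> 2 * L + 2" by simp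
    show "0 \<le> (\<Sum>n\<in>{-int N..int N}. g (nat \<bar>n\<bar>))" by (rule sum_nonneg) (simp add: g_def)
  qed
  finally show ?thesis .
qed

lemma exp_poly_bound:
  fixes c \<theta> \<alpha> :: real
  assumes "c > 0" "\<theta> > 0" "\<alpha> > 0"
  shows "\<exists>C. \<forall>s\<ge>0. exp (- c * s powr \<theta>) \<le> C * (1 + s) powr (-\<alpha>)"
proof -
  have "((\<lambda>s. (1 + s) powr \<alpha> * exp (- c * s powr \<theta>)) \<longlongrightarrow> 0) at_top"
    using assms by real_asymp
  then have "eventually (\<lambda>s. (1 + s) powr \<alpha> * exp (- c * s powr \<theta>) < 1) at_top"
    by (rule order_tendstoD) simp
  then obtain s0 where s0: "\<And>s. s \<ge> s0 \<Longrightarrow> (1 + s) powr \<alpha> * exp (- c * s powr \<theta>) < 1"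
    by (auto simp: eventually_at_top_linorder)
  define C where "C = max 1 ((1 + max s0 0) powr \<alpha>)"
  have "exp (- c * s powr \<theta>) \<le> C * (1 + s) powr (-\<alpha>)" if s: "s \<ge> 0" for s
  proof -
    have pos: "(1 + s) powr \<alpha> > 0" using s by simp
    have "(1 + s) powr \<alpha> * exp (- c * s powr \<theta>) \<le> C"
    proof (cases "s \<ge> s0")
      case True then show ?thesis using s0[OF True] by (simp add: C_def)
    next
      case False
      have "exp (- c * s powr \<theta>) \<le> 1" using assms s by simp
      moreover have "(1 + s) powr \<alpha> \<le> (1 + max s0 0) powr \<alpha>"
        using False s assms by (intro powr_mono2) auto
      ultimately have "(1 + s) powr \<alpha> * exp (- c * s powr \<theta>) \<le> (1 + max s0 0) powr \<alpha> * 1"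
        by (intro mult_mono) auto
      then show ?thesis by (simp add: C_def)
    qed
    then have "exp (- c * s powr \<theta>) \<le> C / (1 + s) powr \<alpha>"
      using pos by (simp add: field_simps)
    then show ?thesis using s by (simp add: powr_minus divide_inverse)
  qed
  then show ?thesis by blast
qed

lemma Lambda1_norm: "x \<in> Lambda1 \<Longrightarrow> norm (x::real^'d::finite) \<le> real CARD('d)"
proof -
  assume x: "x \<in> Lambda1"
  have "norm x \<le> (\<Sum>i\<in>UNIV. \<bar>x $ i\<bar>)" by (rule norm_le_l1_cart)
  also have "\<dots> \<le> (\<Sum>i\<in>(UNIV::'d set). 1)"
  proof (rule sum_mono)
    fix i
    from x have "-1/2 < x$i \<and> x$i < 1/2" by (simp add: Lambda1_def)
    thus "\<bar>x $ i\<bar> \<le> 1" by linarith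
  qed
  finally show ?thesis by simp
qed

lemma tri_norm: "norm (a::'a::real_normed_vector) \<le> norm (x - a - v) + norm x + norm v"
proof -
  have "norm a = norm (x - (x - a - v) - v)" by simp
  also have "\<dots> \<le> norm (x - (x - a - v)) + norm v" by (rule norm_triangle_ineq4)
  also have "norm (x - (x - a - v)) \<le> norm x + norm (x - a - v)" by (rule norm_triangle_ineq4)
  finally show ?thesis by simp
qed

lemma u_dom:
  fixes u :: "real^'d::finite \<Rightarrow> real" and \<alpha> C\<^sub>0 :: real
  assumes u_bounded: "bounded (range u)"
    and alpha: "\<alpha> > 0"
    and C0: "C\<^sub>0 > 0"
    and u_asymp: "((\<lambda>x. u x / (C\<^sub>0 * norm x powr (- \<alpha>))) \<longlongrightarrow> 1) at_infinity"
  shows "\<exists>K B. K \<ge> 1 \<and> B \<ge> 0 \<and> (\<forall>y. u y \<le> K) \<and>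
     (\<forall>x\<in>Lambda1. \<forall>q v. norm v \<le> norm (lat q) / 2 \<longrightarrow> u (x - lat q - v) \<le> B * (1 + norm (lat q)) powr (-\<alpha>))"
proof -
  obtain K0 where K0: "\<And>y. norm (u y) \<le> K0" using u_bounded by (auto simp: bounded_iff)
  define K where "K = max 1 K0"
  have uK: "u y \<le> K" for y using K0[of y] by (simp add: K_def)
  have "eventually (\<lambda>x. u x / (C\<^sub>0 * norm x powr (- \<alpha>)) < 2) at_infinity"
    using u_asymp by (rule order_tendstoD) simp
  then obtain R where R: "\<And>x. R \<le> norm x \<Longrightarrow> u x / (C\<^sub>0 * norm x powr (- \<alpha>)) < 2"
    by (auto simp: eventually_at_infinity)
  define R0 where "R0 = max R 1"
  have uR: "u y \<le> 2 * C\<^sub>0 * norm y powr (-\<alpha>)" if "norm y \<ge> R0" for y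
  proof -
    have "1 \<le> norm y" using that by (simp add: R0_def)
    then have ny: "norm y > 0" by linarith
    have pos: "C\<^sub>0 * norm y powr (- \<alpha>) > 0" using ny C0 by simp
    have "u y / (C\<^sub>0 * norm y powr (- \<alpha>)) < 2" using R that by (simp add: R0_def)
    then show ?thesis using pos by (simp add: divide_less_eq)
  qed
  define S where "S = real CARD('d)"
  define Q0 where "Q0 = 4 * (S + R0)"
  define B where "B = 2 * C\<^sub>0 * 8 powr \<alpha> + K * (1 + Q0) powr \<alpha>"
  have S0: "S \<ge> 0" by (simp add: S_def)
  have R01: "R0 \<ge> 1" by (simp add: R0_def)
  have B0: "B \<ge> 0" using C0 by (simp add: B_def K_def)
  have main: "u (x - lat q - v) \<le> B * (1 + norm (lat q)) powr (-\<alpha>)"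
    if x: "x \<in> Lambda1" and v: "norm v \<le> norm (lat q) / 2" for x q v
  proof (cases "norm (lat q) \<ge> Q0")
    case True
    let ?y = "x - lat q - v" and ?n = "norm (lat q)"
    have nx: "norm x \<le> S" using Lambda1_norm[OF x] by (simp add: S_def)
    have "norm (lat q) \<le> norm ?y + norm x + norm v"
      by (rule tri_norm)
    then have ny: "norm ?y \<ge> ?n / 4" using nx v True R01 by (simp add: Q0_def)
    have "R0 \<le> ?n / 4" using True S0 unfolding Q0_def by simp
    then have nyR: "norm ?y \<ge> R0" using ny by linarith
    have n1: "?n \<ge> 1" using True R01 S0 by (simp add: Q0_def)
    have u1: "u ?y \<le> 2 * C\<^sub>0 * norm ?y powr (-\<alpha>)" by (rule uR[OF nyR])
    have p1: "norm ?y powr (-\<alpha>) \<le> ((1 + ?n) / 8) powr (-\<alpha>)"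
      by (rule powr_mono2') (use alpha ny n1 in auto)
    have p2: "((1 + ?n) / 8) powr (-\<alpha>) = 8 powr \<alpha> * (1 + ?n) powr (-\<alpha>)"
    proof -
      have "((1 + ?n) / 8) powr (-\<alpha>) = (1 + ?n) powr (-\<alpha>) / 8 powr (-\<alpha>)"
        by (rule powr_divide)
      also have "8 powr (-\<alpha>) = 1 / 8 powr \<alpha>" by (simp add: powr_minus_divide)
      finally show ?thesis by simp
    qed
    have "2 * C\<^sub>0 * norm ?y powr (-\<alpha>) \<le> 2 * C\<^sub>0 * (8 powr \<alpha> * (1 + ?n) powr (-\<alpha>))"
      using p1 p2 C0 by (intro mult_left_mono) auto
    also have "\<dots> = (2 * C\<^sub>0 * 8 powr \<alpha>) * (1 + ?n) powr (-\<alpha>)" by (simp only: mult.assoc)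
    also have "\<dots> \<le> B * (1 + ?n) powr (-\<alpha>)"
    proof -
      have "2 * C\<^sub>0 * 8 powr \<alpha> \<le> B" by (simp add: B_def K_def)
      then show ?thesis by (rule mult_right_mono) simp
    qed
    finally show ?thesis using u1 by linarith
  next
    case False
    let ?n = "norm (lat q)"
    have npos: "1 + ?n > 0" by (simp add: add_pos_nonneg)
    have X1: "(1 + Q0) powr \<alpha> * (1 + ?n) powr (-\<alpha>) \<ge> 1"
    proof -
      have le: "(1 + ?n) powr \<alpha> \<le> (1 + Q0) powr \<alpha>" using False alpha by (intro powr_mono2) auto
      have pos: "(1 + ?n) powr \<alpha> > 0" using npos by simp
      have "(1 + Q0) powr \<alpha> * (1 + ?n) powr (-\<alpha>) = (1 + Q0) powr \<alpha> / (1 + ?n) powr \<alpha>"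
        by (simp add: powr_minus_divide)
      also have "\<dots> \<ge> 1" using le pos by (simp add: le_divide_eq_1_pos)
      finally show ?thesis .
    qed
    have K0': "K \<ge> 0" by (simp add: K_def)
    have "K * 1 \<le> K * ((1 + Q0) powr \<alpha> * (1 + ?n) powr (-\<alpha>))"
      using X1 K0' by (rule mult_left_mono)
    also have "\<dots> = (K * (1 + Q0) powr \<alpha>) * (1 + ?n) powr (-\<alpha>)" by (simp only: mult.assoc)
    also have "\<dots> \<le> B * (1 + ?n) powr (-\<alpha>)"
    proof -
      have "K * (1 + Q0) powr \<alpha> \<le> B" using C0 by (simp add: B_def)
      then show ?thesis by (rule mult_right_mono) simp
    qed
    finally show ?thesis using uK[of "x - lat q - v"] by linarith
  qed
  show ?thesis
    by (rule exI[of _ K], rule exI[of _ B]) (use uK B0 main in \<open>auto simp: K_def\<close>)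
qed

lemma psi_eq:
  fixes X :: "'w \<Rightarrow> real^'d::finite" and \<theta> :: real
  assumes theta: "\<theta> > 0" and P: "prob_space M"
    and D: "distributed M lborel X (\<lambda>x. ennreal (theta_density \<theta> x))"
  shows "(\<integral>\<^sup>+\<omega>. ennreal (exp (norm (X \<omega>) powr \<theta> / 2)) \<partial>M) = ennreal (2 powr (real CARD('d) / \<theta>))"
proof -
  define Z where "Z = (LINT y|lborel. exp (- (norm (y::real^'d) powr \<theta>)))"
  have td: "theta_density \<theta> x = exp (- (norm x powr \<theta>)) / Z" for x :: "real^'d"
    by (simp add: theta_density_def Z_def)
  have Xm[measurable]: "X \<in> measurable M borel"
    using distributed_measurable[OF D] by simp
  have fm[measurable]: "(\<lambda>x::real^'d. ennreal (theta_density \<theta> x)) \<in> borel_measurable lborel"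
    using distributed_borel_measurable[OF D] .
  have tot: "(\<integral>\<^sup>+x. ennreal (theta_density \<theta> (x::real^'d)) \<partial>lborel) = 1"
  proof -
    have "emeasure (distr M lborel X) UNIV = emeasure M (space M)"
      by (subst emeasure_distr) (auto simp: measurable_lborel1)
    also have "\<dots> = 1" using prob_space.emeasure_space_1[OF P] .
    finally have "emeasure (density lborel (\<lambda>x::real^'d. ennreal (theta_density \<theta> x))) UNIV = 1"
      using distributed_distr_eq_density[OF D] by simp
    then show ?thesis
      by (subst (asm) emeasure_density) auto
  qed
  define h where "h x = ennreal (exp (- (norm x powr \<theta>) / 2) / Z)" for x :: "real^'d"
  have hm[measurable]: "h \<in> borel_measurable borel" unfolding h_def by measurable
  have "(\<integral>\<^sup>+\<omega>. ennreal (exp (norm (X \<omega>) powr \<theta> / 2)) \<partial>M)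
      = (\<integral>\<^sup>+x. ennreal (theta_density \<theta> (x::real^'d)) * ennreal (exp (norm x powr \<theta> / 2)) \<partial>lborel)"
    by (rule sym, rule distributed_nn_integral[OF D]) simp
  also have "\<dots> = (\<integral>\<^sup>+x. h x \<partial>lborel)"
  proof (rule nn_integral_cong)
    fix x :: "real^'d"
    have a: "- (norm x powr \<theta>) + norm x powr \<theta> / 2 = - (norm x powr \<theta> / 2)" by linarith
    have e: "exp (- (norm x powr \<theta>)) * exp (norm x powr \<theta> / 2) = exp (- (norm x powr \<theta> / 2))"
      by (metis a exp_add)
    show "ennreal (theta_density \<theta> x) * ennreal (exp (norm x powr \<theta> / 2)) = h x"
      by (simp add: td h_def ennreal_mult''[symmetric] e)
  qed
  also have "\<dots> = (\<integral>\<^sup>+y. ennreal (2 powr (real CARD('d) / \<theta>)) * ennreal (theta_density \<theta> (y::real^'d)) \<partial>lborel)"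
  proof -
    define l where "l = 2 powr (1 / \<theta>)"
    have l0: "l > 0" by (simp add: l_def)
    have L: "(lborel :: (real^'d) measure) = density (distr lborel borel (\<lambda>x. 0 + l *\<^sub>R x)) (\<lambda>_. ennreal (\<bar>l\<bar> ^ DIM(real^'d)))"
      by (rule lborel_affine) (use l0 in simp)
    have "(\<integral>\<^sup>+x. h x \<partial>lborel) = (\<integral>\<^sup>+x. h x \<partial>density (distr lborel borel (\<lambda>x. 0 + l *\<^sub>R x)) (\<lambda>_. ennreal (\<bar>l\<bar> ^ DIM(real^'d))))"
      using L by (rule arg_cong[where f = "\<lambda>N. nn_integral N h"])
    also have "\<dots> = (\<integral>\<^sup>+x. ennreal (\<bar>l\<bar> ^ DIM(real^'d)) * h x \<partial>distr lborel borel (\<lambda>x. 0 + l *\<^sub>R x))"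
      by (rule nn_integral_density) auto
    also have "\<dots> = (\<integral>\<^sup>+y. ennreal (\<bar>l\<bar> ^ DIM(real^'d)) * h (0 + l *\<^sub>R y) \<partial>lborel)"
      by (rule nn_integral_distr) auto
    also have "\<dots> = (\<integral>\<^sup>+y. ennreal (2 powr (real CARD('d) / \<theta>)) * ennreal (theta_density \<theta> (y::real^'d)) \<partial>lborel)"
    proof (rule nn_integral_cong)
      fix y :: "real^'d"
      have "\<bar>l\<bar> ^ DIM(real^'d) = 2 powr (real CARD('d) / \<theta>)"
        using l0 by (simp add: l_def powr_power)
      moreover have "h (0 + l *\<^sub>R y) = ennreal (theta_density \<theta> y)"
      proof -
        have "norm (l *\<^sub>R y) powr \<theta> = l powr \<theta> * norm y powr \<theta>"
          using l0 by (simp add: powr_mult)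
        also have "l powr \<theta> = 2" using theta by (simp add: l_def powr_powr)
        finally show ?thesis by (simp add: h_def td)
      qed
      ultimately show "ennreal (\<bar>l\<bar> ^ DIM(real^'d)) * h (0 + l *\<^sub>R y) = ennreal (2 powr (real CARD('d) / \<theta>)) * ennreal (theta_density \<theta> y)"
        by simp
    qed
    finally show ?thesis .
  qed
  also have "\<dots> = ennreal (2 powr (real CARD('d) / \<theta>)) * (\<integral>\<^sup>+y. ennreal (theta_density \<theta> (y::real^'d)) \<partial>lborel)"
    by (rule nn_integral_cmult) simp
  also have "\<dots> = ennreal (2 powr (real CARD('d) / \<theta>))" using tot by simp
  finally show ?thesis .
qed

lemma exp_q_bound:
  fixes X :: "'w \<Rightarrow> real^'d::finite" and \<theta> r b K \<rho> :: real
  assumes theta: "\<theta> > 0" and P: "prob_space M"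
    and D: "distributed M lborel X (\<lambda>x. ennreal (theta_density \<theta> x))"
    and r: "r \<ge> 0" and K: "K \<ge> 0" and rho: "\<rho> \<ge> 0"
  shows "(\<integral>\<^sup>+\<omega>. ennreal (exp (r * (b + K * indicator {x. \<rho> < norm x} (X \<omega>)))) \<partial>M)
           \<le> ennreal (exp (r * b) * (1 + exp (r * K) * exp (- (\<rho> powr \<theta>) / 2) * 2 powr (real CARD('d) / \<theta>)))"
    and "(\<integral>\<^sup>+\<omega>. ennreal (exp (r * (b + K * indicator {x. \<rho> < norm x} (X \<omega>)))) \<partial>M)
           \<le> ennreal (exp (r * (b + K)))"
proof -
  have Xm[measurable]: "X \<in> measurable M borel"
    using distributed_measurable[OF D] by simp
  have sp: "emeasure M (space M) = 1" using prob_space.emeasure_space_1[OF P] .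
  define A where "A = exp (r * b)"
  define Bc where "Bc = exp (r * b) * exp (r * K) * exp (- (\<rho> powr \<theta>) / 2)"
  define g where "g x = exp (norm x powr \<theta> / 2)" for x :: "real^'d"
  have pt: "exp (r * (b + K * indicator {x. \<rho> < norm x} x)) \<le> A + Bc * g x" for x :: "real^'d"
  proof (cases "\<rho> < norm x")
    case True
    have "\<rho> powr \<theta> \<le> norm x powr \<theta>" using True rho theta by (intro powr_mono2) auto
    then have t1: "1 \<le> exp (- (\<rho> powr \<theta>) / 2) * g x"
      by (simp add: g_def flip: exp_add)
    have m: "exp (r * b) * exp (r * K) \<le> Bc * g x"
      unfolding Bc_def using mult_left_mono[OF t1, of "exp (r * b) * exp (r * K)"] by (simp add: mult.assoc)
    have e: "exp (r * (b + K * indicator {x. \<rho> < norm x} x)) = exp (r * b) * exp (r * K)"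
      using True by (simp add: distrib_left flip: exp_add)
    have "A \<ge> 0" by (simp add: A_def)
    then show ?thesis using m e by linarith
  next
    case False
    then show ?thesis by (simp add: A_def Bc_def g_def)
  qed
  have "(\<integral>\<^sup>+\<omega>. ennreal (exp (r * (b + K * indicator {x. \<rho> < norm x} (X \<omega>)))) \<partial>M)
      \<le> (\<integral>\<^sup>+\<omega>. ennreal A + ennreal Bc * ennreal (g (X \<omega>)) \<partial>M)"
  proof (rule nn_integral_mono)
    fix \<omega>
    have A0: "A \<ge> 0" and B0: "Bc \<ge> 0" and g0: "g (X \<omega>) \<ge> 0" by (simp_all add: A_def Bc_def g_def)
    have eq: "ennreal A + ennreal Bc * ennreal (g (X \<omega>)) = ennreal (A + Bc * g (X \<omega>))"
      using A0 B0 g0 by (simp add: ennreal_plus ennreal_mult)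
    show "ennreal (exp (r * (b + K * indicator {x. \<rho> < norm x} (X \<omega>)))) \<le> ennreal A + ennreal Bc * ennreal (g (X \<omega>))"
      unfolding eq by (rule ennreal_leI) (rule pt)
  qed
  also have "\<dots> = ennreal A + ennreal Bc * (\<integral>\<^sup>+\<omega>. ennreal (g (X \<omega>)) \<partial>M)"
    by (subst nn_integral_add) (auto simp: nn_integral_cmult sp g_def)
  also have "(\<integral>\<^sup>+\<omega>. ennreal (g (X \<omega>)) \<partial>M) = ennreal (2 powr (real CARD('d) / \<theta>))"
    unfolding g_def by (rule psi_eq[OF theta P D])
  also have "ennreal A + ennreal Bc * ennreal (2 powr (real CARD('d) / \<theta>))
     = ennreal (exp (r * b) * (1 + exp (r * K) * exp (- (\<rho> powr \<theta>) / 2) * 2 powr (real CARD('d) / \<theta>)))"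
    by (simp add: A_def Bc_def algebra_simps flip: ennreal_plus ennreal_mult)
  finally show "(\<integral>\<^sup>+\<omega>. ennreal (exp (r * (b + K * indicator {x. \<rho> < norm x} (X \<omega>)))) \<partial>M)
           \<le> ennreal (exp (r * b) * (1 + exp (r * K) * exp (- (\<rho> powr \<theta>) / 2) * 2 powr (real CARD('d) / \<theta>)))" .
  have "(\<integral>\<^sup>+\<omega>. ennreal (exp (r * (b + K * indicator {x. \<rho> < norm x} (X \<omega>)))) \<partial>M)
      \<le> (\<integral>\<^sup>+\<omega>. ennreal (exp (r * (b + K))) \<partial>M)"
  proof (rule nn_integral_mono)
    fix \<omega>
    have "r * (K * indicator {x. \<rho> < norm x} (X \<omega>)) \<le> r * K"
      using r K by (intro mult_left_mono) (auto simp: indicator_def)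
    then show "ennreal (exp (r * (b + K * indicator {x. \<rho> < norm x} (X \<omega>)))) \<le> ennreal (exp (r * (b + K)))"
      by (simp add: distrib_left)
  qed
  also have "\<dots> = ennreal (exp (r * (b + K)))" by (simp add: sp)
  finally show "(\<integral>\<^sup>+\<omega>. ennreal (exp (r * (b + K * indicator {x. \<rho> < norm x} (X \<omega>)))) \<partial>M)
           \<le> ennreal (exp (r * (b + K)))" .
qed

lemma pow_sum_le:
  fixes a b :: real assumes "a \<ge> 0" "b \<ge> 0"
  shows "(a + b) ^ n \<le> 2 ^ n * (a ^ n + b ^ n)"
proof -
  have "(a + b) ^ n \<le> (2 * max a b) ^ n"
    using assms by (intro power_mono) auto
  also have "\<dots> = 2 ^ n * (max a b) ^ n" by (simp add: power_mult_distrib)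
  also have "(max a b) ^ n \<le> a ^ n + b ^ n"
    using assms by (cases "a \<le> b") (auto simp: max_def)
  finally show ?thesis by (simp add: mult_left_mono)
qed

lemma r_le_powr:
  fixes r p :: real assumes "r > 0" "p \<ge> 1"
  shows "r \<le> 1 + r powr p"
proof (cases "r \<le> 1")
  case True then show ?thesis by (smt (verit) powr_ge_zero)
next
  case False
  then have "r powr 1 \<le> r powr p" using assms by (intro powr_mono) auto
  then show ?thesis using assms by simp
qed

lemma arith_final:
  fixes \<theta> K Bs Cst :: real and n :: nat
  assumes theta: "\<theta> > 0" and K: "K \<ge> 1" and Bs: "Bs \<ge> 0" and Cst: "Cst \<ge> 0"
  shows "\<exists>c0 c2. c2 \<ge> 0 \<and> (\<forall>r>0. r * Bs + r * K * (2 * (2 * (4 * r * K) powr (1 / \<theta>)) + 2) ^ n + Cst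
             \<le> c0 + c2 * r powr (1 + real n / \<theta>))"
proof -
  define A where "A = 4 * (4 * K) powr (1 / \<theta>)"
  have A0: "A \<ge> 0" by (simp add: A_def)
  define p where "p = 1 + real n / \<theta>"
  have p1: "p \<ge> 1" using theta by (simp add: p_def)
  define c0 where "c0 = Cst + Bs + K * 4 ^ n"
  define c2 where "c2 = Bs + K * 4 ^ n + K * 2 ^ n * A ^ n"
  have "r * Bs + r * K * (2 * (2 * (4 * r * K) powr (1 / \<theta>)) + 2) ^ n + Cst \<le> c0 + c2 * r powr p"
    if r: "r > 0" for r
  proof -
    define x where "x = r powr (1 / \<theta>)"
    have x0: "x \<ge> 0" by (simp add: x_def)
    have "(4 * r * K) powr (1 / \<theta>) = (4 * K) powr (1 / \<theta>) * x"
      unfolding x_def using r K by (simp add: powr_mult[symmetric] mult_ac)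
    then have eq1: "2 * (2 * (4 * r * K) powr (1 / \<theta>)) + 2 = A * x + 2" by (simp add: A_def)
    have "(A * x + 2) ^ n \<le> 2 ^ n * ((A * x) ^ n + 2 ^ n)"
      using A0 x0 by (intro pow_sum_le) auto
    also have "(A * x) ^ n = A ^ n * r powr (real n / \<theta>)"
      using r by (simp add: x_def power_mult_distrib powr_power)
    finally have b1: "(A * x + 2) ^ n \<le> 2 ^ n * (A ^ n * r powr (real n / \<theta>) + 2 ^ n)" .
    have rp: "r * r powr (real n / \<theta>) = r powr p"
      using r by (simp add: p_def powr_add)
    have "r * K * (A * x + 2) ^ n \<le> r * K * (2 ^ n * (A ^ n * r powr (real n / \<theta>) + 2 ^ n))"
      using b1 r K by (intro mult_left_mono) auto
    also have "\<dots> = K * 2 ^ n * A ^ n * (r * r powr (real n / \<theta>)) + K * 4 ^ n * r"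
    proof -
      have f4: "(4::real) ^ n = 2 ^ n * 2 ^ n" by (simp add: power_mult_distrib[symmetric])
      show ?thesis by (simp add: f4 distrib_left mult_ac)
    qed
    also have "\<dots> = K * 2 ^ n * A ^ n * r powr p + K * 4 ^ n * r" by (simp add: rp)
    finally have b2: "r * K * (A * x + 2) ^ n \<le> K * 2 ^ n * A ^ n * r powr p + K * 4 ^ n * r" .
    have rr: "r \<le> 1 + r powr p" by (rule r_le_powr[OF r p1])
    have "(Bs + K * 4 ^ n) * r \<le> (Bs + K * 4 ^ n) * (1 + r powr p)"
      using rr Bs K by (intro mult_left_mono) auto
    moreover have "c2 * r powr p = (Bs + K * 4 ^ n) * r powr p + K * 2 ^ n * A ^ n * r powr p"
      by (simp add: c2_def distrib_right)
    moreover have "(Bs + K * 4 ^ n) * (1 + r powr p) = (Bs + K * 4 ^ n) + (Bs + K * 4 ^ n) * r powr p"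
      by (simp add: distrib_left)
    moreover have "(Bs + K * 4 ^ n) * r = r * Bs + K * 4 ^ n * r"
      by (simp add: distrib_right distrib_left mult_ac)
    ultimately show ?thesis using b2 unfolding eq1 c0_def by linarith
  qed
  moreover have "c2 \<ge> 0" using Bs K A0 by (simp add: c2_def)
  ultimately show ?thesis unfolding p_def by blast
qed

lemma exp_ennreal_SUP:
  fixes s :: "nat \<Rightarrow> real" and r :: real
  assumes r: "r > 0" and inc: "incseq s" and s0: "\<And>N. s N \<ge> 0"
  shows "exp_ennreal r (SUP N. ennreal (s N)) = (SUP N. ennreal (exp (r * s N)))"
proof (cases "(SUP N. ennreal (s N)) = top")
  case True
  have T2: "(SUP N. ennreal (exp (r * s N))) = top"
  proof (subst SUP_eq_top_iff, intro allI impI)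
    fix x :: ennreal assume "x < top"
    then obtain y where y: "x = ennreal y" "y \<ge> 0" by (cases x) auto
    have "ennreal (y / r) < top" by simp
    with True obtain N where N: "ennreal (y / r) < ennreal (s N)"
      by (metis (mono_tags, lifting) SUP_eq_top_iff UNIV_I)
    then have "y / r < s N" by (metis ennreal_leI not_less)
    then have "y < r * s N" using r by (simp add: field_simps)
    also have "r * s N < exp (r * s N)" by (smt (verit) exp_ge_add_one_self)
    finally have "x < ennreal (exp (r * s N))" using y by (simp add: ennreal_less_iff)
    then show "\<exists>i\<in>UNIV. x < ennreal (exp (r * s i))" by blast
  qed
  show ?thesis by (simp add: exp_ennreal_def True T2 del: SUP_eq_top_iff)
next
  case False
  define L where "L = enn2real (SUP N. ennreal (s N))"
  have L0: "L \<ge> 0" by (simp add: L_def)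
  have SL: "(SUP N. ennreal (s N)) = ennreal L" unfolding L_def by (metis False ennreal_enn2real_if)
  have "(\<lambda>N. ennreal (s N)) \<longlonglongrightarrow> (SUP N. ennreal (s N))"
    by (rule LIMSEQ_SUP) (use inc in \<open>auto simp: incseq_def intro!: ennreal_leI\<close>)
  then have "s \<longlonglongrightarrow> L" unfolding SL using s0 L0 by (subst (asm) tendsto_ennreal_iff) auto
  then have "(\<lambda>N. exp (r * s N)) \<longlonglongrightarrow> exp (r * L)" by (intro tendsto_intros)
  then have t1: "(\<lambda>N. ennreal (exp (r * s N))) \<longlonglongrightarrow> ennreal (exp (r * L))" by (rule tendsto_ennrealI)
  have inc2: "incseq (\<lambda>N. ennreal (exp (r * s N)))"
    using inc r by (auto simp: incseq_def intro!: ennreal_leI mult_left_mono)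
  have t2: "(\<lambda>N. ennreal (exp (r * s N))) \<longlonglongrightarrow> (SUP N. ennreal (exp (r * s N)))"
    by (rule LIMSEQ_SUP[OF inc2])
  have "(SUP N. ennreal (exp (r * s N))) = ennreal (exp (r * L))"
    using LIMSEQ_unique[OF t2 t1] .
  then show ?thesis using SL L0 by (simp add: exp_ennreal_def)
qed

lemma count_SUP:
  fixes f :: "int^'d::finite \<Rightarrow> ennreal"
  shows "(\<integral>\<^sup>+q. f q \<partial>count_space UNIV) = (SUP N. \<Sum>q\<in>boxN N. f q)"
proof -
  have inc: "incseq (\<lambda>N q. f q * indicator (boxN N) q)"
    by (auto simp: incseq_def le_fun_def indicator_def dest: boxN_mono[THEN subsetD])
  have pw: "(SUP N. f q * indicator (boxN N) q) = f q" for q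
  proof (rule antisym)
    show "(SUP N. f q * indicator (boxN N) q) \<le> f q"
      by (rule SUP_least) (auto simp: indicator_def)
    obtain N where "q \<in> boxN N" using in_boxN by blast
    then have "f q = f q * indicator (boxN N) q" by simp
    also have "\<dots> \<le> (SUP N. f q * indicator (boxN N) q)" by (rule SUP_upper) simp
    finally show "f q \<le> (SUP N. f q * indicator (boxN N) q)" .
  qed
  have "(\<integral>\<^sup>+q. f q \<partial>count_space UNIV) = (\<integral>\<^sup>+q. (SUP N. f q * indicator (boxN N) q) \<partial>count_space UNIV)"
    by (simp add: pw)
  also have "\<dots> = (SUP N. \<integral>\<^sup>+q. f q * indicator (boxN N) q \<partial>count_space UNIV)"
    by (rule nn_integral_monotone_convergence_SUP[OF inc]) simp
  also have "\<dots> = (SUP N. \<Sum>q\<in>boxN N. f q)"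
  proof -
    have "(\<integral>\<^sup>+q. f q * indicator (boxN N) q \<partial>count_space UNIV) = (\<Sum>q\<in>boxN N. f q)" for N
    proof -
      have "(\<integral>\<^sup>+q. f q * indicator (boxN N) q \<partial>count_space UNIV) = (\<integral>\<^sup>+q. f q \<partial>count_space (boxN N))"
        by (simp add: nn_integral_count_space_indicator)
      also have "\<dots> = (\<Sum>q\<in>boxN N. f q)" by (rule nn_integral_count_space_finite[OF finite_boxN])
      finally show ?thesis .
    qed
    then show ?thesis by simp
  qed
  finally show ?thesis .
qed

lemma exp_ennreal_mono:
  assumes "r \<ge> 0" "s \<le> t"
  shows "exp_ennreal r s \<le> exp_ennreal r t"
proof (cases "t = top")
  case True then show ?thesis by (simp add: exp_ennreal_def)
next
  case False
  then have "s \<noteq> top" using assms(2) by (auto simp: top_unique)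
  moreover have "enn2real s \<le> enn2real t" using assms(2) False by (intro enn2real_mono) (auto simp: less_top)
  ultimately show ?thesis using False assms(1)
    by (auto simp: exp_ennreal_def intro!: ennreal_leI mult_left_mono)
qed

lemma exp_ennreal_mono_r:
  assumes "0 \<le> r" "r \<le> r'"
  shows "exp_ennreal r s \<le> exp_ennreal r' s"
  using assms by (auto simp: exp_ennreal_def intro!: ennreal_leI mult_right_mono)

theorem lemma7p2:
  fixes u :: "real^'d \<Rightarrow> real"
    and \<alpha> C\<^sub>0 \<theta> :: real
    and M :: "'w measure"
    and \<xi> :: "int^'d \<Rightarrow> 'w \<Rightarrow> real^'d"
  assumes u_bounded: "bounded (range u)"
    and u_nonneg: "\<And>x. 0 \<le> u x"
    and alpha: "\<alpha> > real CARD('d)"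
    and C0: "C\<^sub>0 > 0"
    and u_asymp: "((\<lambda>x. u x / (C\<^sub>0 * norm x powr (- \<alpha>))) \<longlongrightarrow> 1) at_infinity"
    and theta: "\<theta> > 0"
    and P: "prob_space M"
    and indep: "prob_space.indep_vars M (\<lambda>_. borel) \<xi> UNIV"
    and distr: "\<And>q. distributed M lborel (\<xi> q) (\<lambda>x. ennreal (theta_density \<theta> x))"
  shows "\<exists>c\<^sub>1 c\<^sub>2 :: real. \<forall>r \<ge> 0.
           (\<integral>\<^sup>+ \<omega>. exp_ennreal r (SUP x\<in>Lambda1. Vxi u (\<lambda>q. \<xi> q \<omega>) x) \<partial>M)
             \<le> ennreal (c\<^sub>1 * exp (c\<^sub>2 * r powr (1 + real CARD('d) / \<theta>)))"
proof -
  interpret prob_space M by (rule P)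
  have alpha0: "\<alpha> > 0" using alpha by (smt (verit) of_nat_0_le_iff)
  obtain K B where K1: "K \<ge> 1" and B0: "B \<ge> 0" and uK: "\<And>y. u y \<le> K"
    and uB: "\<And>x q v. x \<in> Lambda1 \<Longrightarrow> norm v \<le> norm (lat q) / 2 \<Longrightarrow> u (x - lat q - v) \<le> B * (1 + norm (lat q)) powr (-\<alpha>)"
    using u_dom[OF u_bounded alpha0 C0 u_asymp] by blast
  define b where "b q = B * (1 + norm (lat q)) powr (-\<alpha>)" for q :: "int^'d"
  define a where "a q y = b q + K * indicator {x. norm (lat q) / 2 < norm x} y" for q :: "int^'d" and y :: "real^'d"
  have b0: "b q \<ge> 0" for q using B0 by (simp add: b_def)
  have a0: "a q y \<ge> 0" for q y using b0[of q] K1 by (simp add: a_def)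
  have dom: "u (x - lat q - v) \<le> a q v" if x: "x \<in> Lambda1" for x q v
  proof (cases "norm v \<le> norm (lat q) / 2")
    case True
    then show ?thesis using uB[OF x True] by (simp add: a_def b_def indicator_def)
  next
    case False
    then show ?thesis using uK[of "x - lat q - v"] b0[of q] by (simp add: a_def indicator_def)
  qed
  define S where "S \<omega> = (\<integral>\<^sup>+q. ennreal (a q (\<xi> q \<omega>)) \<partial>count_space UNIV)" for \<omega>
  have supS: "(SUP x\<in>Lambda1. Vxi u (\<lambda>q. \<xi> q \<omega>) x) \<le> S \<omega>" for \<omega>
    unfolding Vxi_def S_def
    by (rule SUP_least, rule nn_integral_mono) (simp add: ennreal_leI dom)
  have S_SUP: "S \<omega> = (SUP N. ennreal (\<Sum>q\<in>boxN N. a q (\<xi> q \<omega>)))" for \<omega>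
    unfolding S_def count_SUP by (simp add: a0)
  have \<xi>m[measurable]: "\<xi> q \<in> measurable M borel" for q
    using distributed_measurable[OF distr[of q]] by simp
  have setm[measurable]: "{x::real^'d. c < norm x} \<in> sets borel" for c
    by (rule borel_open) (intro open_Collect_less continuous_intros)
  have am[measurable]: "(\<lambda>\<omega>. a q (\<xi> q \<omega>)) \<in> borel_measurable M" for q
    unfolding a_def by measurable
  obtain C\<alpha> where C\<alpha>: "\<And>N. (\<Sum>q\<in>(boxN N :: (int^'d) set). (1 + norm (lat q)) powr (-\<alpha>)) \<le> C\<alpha>"
    using lattice_powr_sum[OF alpha] by blast
  have C\<alpha>0: "C\<alpha> \<ge> 0" using C\<alpha>[of 0] by (smt (verit) powr_ge_zero sum_nonneg)
  define c where "c = 1 / (4 * 2 powr \<theta>)"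
  have c0: "c > 0" by (simp add: c_def)
  obtain Ce where Ce: "\<And>s. s \<ge> 0 \<Longrightarrow> exp (- c * s powr \<theta>) \<le> Ce * (1 + s) powr (-\<alpha>)"
    using exp_poly_bound[OF c0 theta alpha0] by blast
  have Ce0: "Ce \<ge> 0" using Ce[of 0] by simp
  define \<Psi> where "\<Psi> = 2 powr (real CARD('d) / \<theta>)"
  have \<Psi>0: "\<Psi> \<ge> 0" by (simp add: \<Psi>_def)
  define T where "T r = r * (B * C\<alpha>) + r * K * (2 * (2 * (4 * r * K) powr (1 / \<theta>)) + 2) ^ CARD('d) + \<Psi> * Ce * C\<alpha>" for r
  have key: "(\<integral>\<^sup>+ \<omega>. exp_ennreal r (SUP x\<in>Lambda1. Vxi u (\<lambda>q. \<xi> q \<omega>) x) \<partial>M) \<le> ennreal (exp (T r))"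
    if r: "r > 0" for r
  proof -
    define Lr where "Lr = 2 * (4 * r * K) powr (1 / \<theta>)"
    have Lr0: "Lr \<ge> 0" by (simp add: Lr_def)
    define \<rho> where "\<rho> q = norm (lat q) / 2" for q :: "int^'d"
    define m where "m q = (if norm (lat q) < Lr then exp (r * (b q + K))
       else exp (r * b q) * (1 + exp (r * K) * exp (- (\<rho> q powr \<theta>) / 2) * \<Psi>))" for q
    define w where "w q = r * b q + (if norm (lat q) < Lr then r * K else \<Psi> * exp (- (\<rho> q powr \<theta>) / 4))" for q
    have perq: "(\<integral>\<^sup>+\<omega>. ennreal (exp (r * a q (\<xi> q \<omega>))) \<partial>M) \<le> ennreal (m q)" for q
    proof -
      note eb = exp_q_bound[OF theta P distr[of q], of r K "\<rho> q" "b q"]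
      have "\<rho> q \<ge> 0" by (simp add: \<rho>_def)
      then show ?thesis using eb r K1 unfolding m_def a_def \<Psi>_def \<rho>_def by auto
    qed
    have mw: "m q \<le> exp (w q)" for q
    proof (cases "norm (lat q) < Lr")
      case True
      then show ?thesis by (simp add: m_def w_def distrib_left)
    next
      case False
      have "(4 * r * K) powr (1 / \<theta>) \<le> \<rho> q" using False by (simp add: Lr_def \<rho>_def)
      then have "((4 * r * K) powr (1 / \<theta>)) powr \<theta> \<le> \<rho> q powr \<theta>"
        using theta by (intro powr_mono2) auto
      moreover have "((4 * r * K) powr (1 / \<theta>)) powr \<theta> = 4 * r * K"
        using theta r K1 by (simp add: powr_powr)
      ultimately have big: "4 * r * K \<le> \<rho> q powr \<theta>" by simp
      have "exp (r * K) * exp (- (\<rho> q powr \<theta>) / 2) \<le> exp (- (\<rho> q powr \<theta>) / 4)"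
        unfolding exp_add[symmetric] using big by simp
      then have "1 + exp (r * K) * exp (- (\<rho> q powr \<theta>) / 2) * \<Psi> \<le> 1 + \<Psi> * exp (- (\<rho> q powr \<theta>) / 4)"
        using \<Psi>0 by (simp add: mult.commute mult_left_mono)
      also have "\<dots> \<le> exp (\<Psi> * exp (- (\<rho> q powr \<theta>) / 4))" by (rule exp_ge_add_one_self)
      finally have "exp (r * b q) * (1 + exp (r * K) * exp (- (\<rho> q powr \<theta>) / 2) * \<Psi>)
          \<le> exp (r * b q) * exp (\<Psi> * exp (- (\<rho> q powr \<theta>) / 4))"
        by (intro mult_left_mono) auto
      then show ?thesis using False by (simp add: m_def w_def exp_add)
    qed
    have m0: "m q \<ge> 0" for q
      using \<Psi>0 by (simp add: m_def)
    have sumw: "(\<Sum>q\<in>boxN N. w q) \<le> T r" for N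
    proof -
      define ind where "ind q = (if norm (lat q) < Lr then 1 else 0::real)" for q :: "int^'d"
      define e where "e q = (if norm (lat q) < Lr then 0 else exp (- (\<rho> q powr \<theta>) / 4))" for q :: "int^'d"
      have wq: "w q = r * b q + (r * K) * ind q + \<Psi> * e q" for q
        by (simp add: w_def ind_def e_def)
      have "(\<Sum>q\<in>boxN N. w q) = (\<Sum>q\<in>boxN N. r * b q) + (\<Sum>q\<in>boxN N. (r * K) * ind q) + (\<Sum>q\<in>boxN N. \<Psi> * e q)"
        by (simp only: wq sum.distrib)
      also have "\<dots> = r * (\<Sum>q\<in>boxN N. b q) + (r * K) * (\<Sum>q\<in>boxN N. ind q) + \<Psi> * (\<Sum>q\<in>boxN N. e q)"
        by (simp only: sum_distrib_left)
      finally have eq: "(\<Sum>q\<in>boxN N. w q) = r * (\<Sum>q\<in>boxN N. b q) + (r * K) * (\<Sum>q\<in>boxN N. ind q) + \<Psi> * (\<Sum>q\<in>boxN N. e q)" .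
      have s1: "(\<Sum>q\<in>boxN N. b q) \<le> B * C\<alpha>"
      proof -
        have "(\<Sum>q\<in>boxN N. b q) = B * (\<Sum>q\<in>(boxN N :: (int^'d) set). (1 + norm (lat q)) powr (-\<alpha>))"
          by (simp add: b_def sum_distrib_left)
        also have "\<dots> \<le> B * C\<alpha>" using C\<alpha>[of N] B0 by (rule mult_left_mono)
        finally show ?thesis .
      qed
      have s2: "(\<Sum>q\<in>boxN N. ind q) \<le> (2 * Lr + 2) ^ CARD('d)"
        unfolding ind_def by (rule lattice_count[OF Lr0])
      have s3: "(\<Sum>q\<in>boxN N. e q) \<le> Ce * C\<alpha>"
      proof -
        have "(\<Sum>q\<in>boxN N. e q) \<le> (\<Sum>q\<in>(boxN N :: (int^'d) set). Ce * (1 + norm (lat q)) powr (-\<alpha>))"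
        proof (rule sum_mono)
          fix q :: "int^'d"
          have "\<rho> q powr \<theta> / 4 = c * norm (lat q) powr \<theta>"
            by (simp add: \<rho>_def c_def powr_divide)
          then have "exp (- (\<rho> q powr \<theta>) / 4) = exp (- c * norm (lat q) powr \<theta>)" by simp
          also have "\<dots> \<le> Ce * (1 + norm (lat q)) powr (-\<alpha>)" by (rule Ce) simp
          finally show "e q \<le> Ce * (1 + norm (lat q)) powr (-\<alpha>)"
            using Ce0 by (auto simp: e_def)
        qed
        also have "\<dots> = Ce * (\<Sum>q\<in>(boxN N :: (int^'d) set). (1 + norm (lat q)) powr (-\<alpha>))"
          by (simp add: sum_distrib_left)
        also have "\<dots> \<le> Ce * C\<alpha>" using C\<alpha>[of N] Ce0 by (rule mult_left_mono)
        finally show ?thesis .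
      qed
      have t1: "r * (\<Sum>q\<in>boxN N. b q) \<le> r * (B * C\<alpha>)" using s1 r by (intro mult_left_mono) auto
      have t2: "(r * K) * (\<Sum>q\<in>boxN N. ind q) \<le> (r * K) * (2 * Lr + 2) ^ CARD('d)"
        using s2 r K1 by (intro mult_left_mono) auto
      have t3: "\<Psi> * (\<Sum>q\<in>boxN N. e q) \<le> \<Psi> * (Ce * C\<alpha>)" using s3 \<Psi>0 by (rule mult_left_mono)
      have tr: "T r = r * (B * C\<alpha>) + (r * K) * (2 * Lr + 2) ^ CARD('d) + \<Psi> * (Ce * C\<alpha>)"
        by (simp add: T_def Lr_def mult.assoc)
      show ?thesis unfolding eq tr using t1 t2 t3 by linarith
    qed
    have perN: "(\<integral>\<^sup>+\<omega>. ennreal (exp (r * (\<Sum>q\<in>boxN N. a q (\<xi> q \<omega>)))) \<partial>M) \<le> ennreal (exp (T r))" for N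
    proof -
      have "(\<integral>\<^sup>+\<omega>. ennreal (exp (r * (\<Sum>q\<in>boxN N. a q (\<xi> q \<omega>)))) \<partial>M)
          = (\<integral>\<^sup>+\<omega>. (\<Prod>q\<in>boxN N. ennreal (exp (r * a q (\<xi> q \<omega>)))) \<partial>M)"
        by (simp add: sum_distrib_left exp_sum finite_boxN prod_ennreal)
      also have "\<dots> = (\<Prod>q\<in>boxN N. \<integral>\<^sup>+\<omega>. ennreal (exp (r * a q (\<xi> q \<omega>))) \<partial>M)"
      proof (rule indep_vars_nn_integral[where X="\<lambda>q \<omega>. ennreal (exp (r * a q (\<xi> q \<omega>)))"])
        show "finite (boxN N :: (int^'d) set)" by (rule finite_boxN)
        have "indep_vars (\<lambda>_. borel) \<xi> (boxN N)" by (rule indep_vars_subset[OF indep]) simp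
        then show "indep_vars (\<lambda>_. borel) (\<lambda>q \<omega>. ennreal (exp (r * a q (\<xi> q \<omega>)))) (boxN N)"
        proof (rule indep_vars_compose2)
          fix q :: "int^'d"
          show "(\<lambda>y. ennreal (exp (r * a q y))) \<in> borel_measurable borel" unfolding a_def by measurable
        qed
        show "\<And>i \<omega>. i \<in> boxN N \<Longrightarrow> 0 \<le> ennreal (exp (r * a i (\<xi> i \<omega>)))" by simp
      qed
      also have "\<dots> \<le> (\<Prod>q\<in>boxN N. ennreal (m q))"
        by (rule prod_mono_ennreal) (rule perq)
      also have "\<dots> = ennreal (\<Prod>q\<in>boxN N. m q)" by (rule prod_ennreal) (simp add: m0)
      also have "\<dots> \<le> ennreal (exp (T r))"
      proof (rule ennreal_leI)
        have "(\<Prod>q\<in>boxN N. m q) \<le> (\<Prod>q\<in>boxN N. exp (w q))" by (rule prod_mono) (simp add: m0 mw)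
        also have "\<dots> = exp (\<Sum>q\<in>boxN N. w q)" by (simp add: exp_sum finite_boxN)
        also have "\<dots> \<le> exp (T r)" using sumw[of N] by simp
        finally show "(\<Prod>q\<in>boxN N. m q) \<le> exp (T r)" .
      qed
      finally show ?thesis .
    qed
    have inc: "incseq (\<lambda>N. (\<Sum>q\<in>boxN N. a q (\<xi> q \<omega>)))" for \<omega>
      by (auto simp: incseq_def intro!: sum_mono2 finite_boxN boxN_mono a0)
    have "(\<integral>\<^sup>+\<omega>. exp_ennreal r (SUP x\<in>Lambda1. Vxi u (\<lambda>q. \<xi> q \<omega>) x) \<partial>M) \<le> (\<integral>\<^sup>+\<omega>. exp_ennreal r (S \<omega>) \<partial>M)"
      by (rule nn_integral_mono) (rule exp_ennreal_mono[OF _ supS], use r in simp)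
    also have "\<dots> = (\<integral>\<^sup>+\<omega>. (SUP N. ennreal (exp (r * (\<Sum>q\<in>boxN N. a q (\<xi> q \<omega>))))) \<partial>M)"
    proof (rule nn_integral_cong)
      fix \<omega>
      show "exp_ennreal r (S \<omega>) = (SUP N. ennreal (exp (r * (\<Sum>q\<in>boxN N. a q (\<xi> q \<omega>)))))"
        unfolding S_SUP by (rule exp_ennreal_SUP[OF r inc]) (simp add: sum_nonneg a0)
    qed
    also have "\<dots> = (SUP N. \<integral>\<^sup>+\<omega>. ennreal (exp (r * (\<Sum>q\<in>boxN N. a q (\<xi> q \<omega>)))) \<partial>M)"
    proof (rule nn_integral_monotone_convergence_SUP)
      show "incseq (\<lambda>N \<omega>. ennreal (exp (r * (\<Sum>q\<in>boxN N. a q (\<xi> q \<omega>)))))"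
        using inc r unfolding incseq_def le_fun_def by (auto intro!: ennreal_leI mult_left_mono)
      show "(\<lambda>\<omega>. ennreal (exp (r * (\<Sum>q\<in>boxN N. a q (\<xi> q \<omega>))))) \<in> borel_measurable M" for N
        by measurable
    qed
    also have "\<dots> \<le> ennreal (exp (T r))" by (rule SUP_least) (rule perN)
    finally show ?thesis .
  qed
  have "\<exists>c0 c2. c2 \<ge> 0 \<and> (\<forall>r>0. r * (B * C\<alpha>) + r * K * (2 * (2 * (4 * r * K) powr (1 / \<theta>)) + 2) ^ CARD('d) + \<Psi> * Ce * C\<alpha>
             \<le> c0 + c2 * r powr (1 + real CARD('d) / \<theta>))"
    by (rule arith_final[OF theta K1]) (use B0 C\<alpha>0 \<Psi>0 Ce0 in auto)
  then obtain c0 c2 where c2: "c2 \<ge> 0"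
    and cc: "\<And>r. r > 0 \<Longrightarrow> T r \<le> c0 + c2 * r powr (1 + real CARD('d) / \<theta>)"
    unfolding T_def by blast
  have bnd: "(\<integral>\<^sup>+ \<omega>. exp_ennreal r (SUP x\<in>Lambda1. Vxi u (\<lambda>q. \<xi> q \<omega>) x) \<partial>M)
      \<le> ennreal (exp (c0 + c2 * r powr (1 + real CARD('d) / \<theta>)))" if r: "r > 0" for r
  proof -
    have "exp (T r) \<le> exp (c0 + c2 * r powr (1 + real CARD('d) / \<theta>))" using cc[OF r] by simp
    then show ?thesis using key[OF r] by (meson ennreal_leI order_trans)
  qed
  show ?thesis
  proof (rule exI[of _ "exp c0 * exp c2"], rule exI[of _ c2], intro allI impI)
    fix r :: real assume r: "r \<ge> 0"
    show "(\<integral>\<^sup>+ \<omega>. exp_ennreal r (SUP x\<in>Lambda1. Vxi u (\<lambda>q. \<xi> q \<omega>) x) \<partial>M)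
             \<le> ennreal (exp c0 * exp c2 * exp (c2 * r powr (1 + real CARD('d) / \<theta>)))"
    proof (cases "r > 0")
      case True
      have "exp (c0 + c2 * r powr (1 + real CARD('d) / \<theta>)) \<le> exp c0 * exp c2 * exp (c2 * r powr (1 + real CARD('d) / \<theta>))"
        using c2 by (simp add: exp_add)
      then show ?thesis using bnd[OF True] by (meson ennreal_leI order_trans)
    next
      case False
      then have r0: "r = 0" using r by simp
      have "(\<integral>\<^sup>+ \<omega>. exp_ennreal r (SUP x\<in>Lambda1. Vxi u (\<lambda>q. \<xi> q \<omega>) x) \<partial>M)
          \<le> (\<integral>\<^sup>+ \<omega>. exp_ennreal 1 (SUP x\<in>Lambda1. Vxi u (\<lambda>q. \<xi> q \<omega>) x) \<partial>M)"
        by (rule nn_integral_mono) (rule exp_ennreal_mono_r, use r0 in auto)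
      also have "\<dots> \<le> ennreal (exp (c0 + c2 * 1 powr (1 + real CARD('d) / \<theta>)))" by (rule bnd) simp
      also have "\<dots> = ennreal (exp c0 * exp c2 * exp (c2 * r powr (1 + real CARD('d) / \<theta>)))"
        using r0 by (simp add: exp_add)
      finally show ?thesis .
    qed
  qed
qed

end
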